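(* Let $m,k\in\mathbb{N}$ and let $\gamma\in\mathbb{C}$ with $\gamma,\ 1-2m-\gamma\notin\mathbb{Z}_0^-$. Then \[ {}_3F_2\left[\begin{array}{r} -2m,\ 1+k,\ \gamma;\\ -2m-k,\ 1-2m-\gamma;\end{array}1\right]_{2m}=\frac{(1+k)_{m}(\gamma)_{m}2^{2m}\left(\frac{1}{2}\right)_m(1+k+\gamma)_{2m}}{(1+k)_{2m}(\gamma)_{2m}(1+k+\gamma)_{m}}. \]
   Context: $\mathbb{N}=\{1,2,3,\dots\}$, $\mathbb{Z}_0^-=\{0,-1,-2,\dots\}$. For $a\in\mathbb{C}$ and $n\in\mathbb{N}_0$, $(a)_0=1$ and $(a)_n=a(a+1)\cdots(a+n-1)$. For $N\in\mathbb{N}_0$, ${}_3F_2\left[\begin{array}{r} a_1,a_2,a_3;\\ b_1,b_2;\end{array}z\right]_N=\sum_{n=0}^{N}\frac{(a_1)_n(a_2)_n(a_3)_n}{(b_1)_n(b_2)_n}\frac{z^n}{n!}$ (the sum of the first $N+1$ terms), defined whenever $(b_1)_n(b_2)_n\neq0$ for $0\le n\le N$. *)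

theory Defs
  imports "HOL-Analysis.Analysis"
begin

definition hyp3F2_trunc ::
  "complex \<Rightarrow> complex \<Rightarrow> complex \<Rightarrow> complex \<Rightarrow> complex \<Rightarrow> complex \<Rightarrow> nat \<Rightarrow> complex" where
  "hyp3F2_trunc a1 a2 a3 b1 b2 z N =
     (\<Sum>n\<le>N. pochhammer a1 n * pochhammer a2 n * pochhammer a3 n /
              (pochhammer b1 n * pochhammer b2 n) * z ^ n / of_nat (fact n))"

end

theory Submission
  imports Defs
begin

definition tt :: "complex \<Rightarrow> complex \<Rightarrow> nat \<Rightarrow> nat \<Rightarrow> complex" where
 "tt b c m n = pochhammer (- 2 * of_nat m) n * pochhammer b n * pochhammer c n /
     (pochhammer (1 - 2 * of_nat m - b) n * pochhammer (1 - 2 * of_nat m - c) n * of_nat (fact n))"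

lemma poch_shift2:
  fixes a a' y z :: complex
  assumes "a + 2 = a'" "(a + of_nat n) * (a + of_nat n + 1) = y" "a * (a + 1) = z"
  shows "pochhammer a n * y = z * pochhammer a' n"
proof -
  have "pochhammer a (Suc (Suc n)) = pochhammer a n * ((a + of_nat n) * (a + of_nat n + 1))"
    by (simp add: pochhammer_Suc algebra_simps)
  moreover have "pochhammer a (Suc (Suc n)) = a * (a + 1) * pochhammer (a + 1 + 1) n"
    by (simp add: pochhammer_rec)
  moreover have "a + 1 + 1 = a'" using assms(1) by (metis add.assoc one_add_one)
  ultimately show ?thesis using assms by simp
qed

lemma generic2:
  fixes P0 P0' Pb Pb' Pc Pc' X Z F y z eb db ec dc :: complex
  assumes "P0 * y = z * P0'" "Pb * db = eb * Pb'" "Pc * dc = ec * Pc'"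
    and "z \<noteq> 0" "eb \<noteq> 0" "ec \<noteq> 0" "db \<noteq> 0" "dc \<noteq> 0" "Pb \<noteq> 0" "Pc \<noteq> 0" "F \<noteq> 0"
  shows "P0' * X * Z / (Pb' * Pc' * F) = P0 * X * Z / (Pb * Pc * F) * (y * (eb * ec) / (z * (db * dc)))"
proof -
  have 1: "P0' = P0 * y / z" using assms by (simp add: field_simps)
  have 2: "Pb' = Pb * db / eb" using assms by (simp add: field_simps)
  have 3: "Pc' = Pc * dc / ec" using assms by (simp add: field_simps)
  show ?thesis unfolding 1 2 3 using assms(4-11) by (simp add: field_simps)
qed

lemma nz_int: "(x::complex) = of_int i \<Longrightarrow> i \<noteq> 0 \<Longrightarrow> x \<noteq> 0" by simp
lemma nz_c1: "c \<notin> \<int> \<Longrightarrow> (x::complex) = c + of_int i \<Longrightarrow> x \<noteq> 0"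
  by (metis Ints_minus Ints_of_int add.commute add_minus_cancel minus_add_cancel neg_equal_iff_equal add_0_right)
lemma nz_c2: "c \<notin> \<int> \<Longrightarrow> (x::complex) = of_int i - c \<Longrightarrow> x \<noteq> 0"
  by (metis Ints_of_int eq_iff_diff_eq_0)

lemma tt_rel:
  fixes b c :: complex and k m n :: nat
  assumes k: "k \<ge> 1" and b: "b = of_nat k + 1" and c: "c \<notin> \<int>" and n: "n \<le> 2*m+1"
  shows "tt b c m n = tt b c (Suc m) n *
     (((of_nat n-2* of_nat m-2)*(of_nat n-2* of_nat m-1)) * (((b+2* of_nat m+1)*(b+2* of_nat m))*((c+2* of_nat m+1)*(c+2* of_nat m)))
      / (((2*(of_nat m+1))*(2* of_nat m+1)) * (((of_nat n-2* of_nat m-b-1)*(of_nat n-2* of_nat m-b))*((of_nat n-2* of_nat m-c-1)*(of_nat n-2* of_nat m-c)))))"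
proof -
  define N :: complex where "N = of_nat n"
  define M :: complex where "M = of_nat m"
  have s1: "pochhammer (- 2 * (M + 1)) n * ((N-2*M-2)*(N-2*M-1)) = ((2*(M+1))*(2*M+1)) * pochhammer (- 2 * M) n"
    by (rule poch_shift2) (simp_all add: N_def algebra_simps)
  have s2: "pochhammer (1 - 2 * (M + 1) - b) n * ((N-2*M-b-1)*(N-2*M-b)) = ((b+2*M+1)*(b+2*M)) * pochhammer (1 - 2 * M - b) n"
    by (rule poch_shift2) (simp_all add: N_def algebra_simps)
  have s3: "pochhammer (1 - 2 * (M + 1) - c) n * ((N-2*M-c-1)*(N-2*M-c)) = ((c+2*M+1)*(c+2*M)) * pochhammer (1 - 2 * M - c) n"
    by (rule poch_shift2) (simp_all add: N_def algebra_simps)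
  have z: "(2*(M+1))*(2*M+1) \<noteq> 0"
    by (rule nz_int[of _ "(2*(int m+1))*(2*int m+1)"]) (simp_all add: M_def)
  have eb: "(b+2*M+1)*(b+2*M) \<noteq> 0"
    apply (rule nz_int[of _ "(int k+2*int m+2)*(int k + 2*int m+1)"])
    subgoal by (simp add: M_def b algebra_simps)
    subgoal by (auto simp: mult_eq_0_iff)
    done
  have db: "(N-2*M-b-1)*(N-2*M-b) \<noteq> 0"
    apply (rule nz_int[of _ "(int n-2*int m-int k-2)*(int n-2*int m - int k - 1)"])
    subgoal by (simp add: M_def N_def b algebra_simps)
    subgoal using n k by (auto simp: mult_eq_0_iff)
    done
  have ec: "(c+2*M+1)*(c+2*M) \<noteq> 0"
    using nz_c1[OF c, of "c+2*M+1" "2*int m+1"] nz_c1[OF c, of "c+2*M" "2*int m"] by (simp add: M_def)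
  have dc: "(N-2*M-c-1)*(N-2*M-c) \<noteq> 0"
    using nz_c2[OF c, of "N-2*M-c-1" "int n-2*int m-1"] nz_c2[OF c, of "N-2*M-c" "int n-2*int m"] by (simp add: M_def N_def)
  have Pb: "pochhammer (1 - 2 * (M + 1) - b) n \<noteq> 0"
  proof
    assume "pochhammer (1 - 2 * (M + 1) - b) n = 0"
    then obtain j where j: "j < n" "1 - 2 * (M + 1) - b = - of_nat j" by (auto simp: pochhammer_eq_0_iff)
    then have "(of_nat j :: complex) = of_nat (2*m+k+2)" by (simp add: M_def b algebra_simps)
    then have "j = 2*m+k+2" by (simp only: of_nat_eq_iff)
    with j n show False by simp
  qed
  have Pc: "pochhammer (1 - 2 * (M + 1) - c) n \<noteq> 0"
  proof
    assume "pochhammer (1 - 2 * (M + 1) - c) n = 0"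
    then obtain j where j: "1 - 2 * (M + 1) - c = - of_nat j" by (auto simp: pochhammer_eq_0_iff)
    then have "c = of_int (int j - 2*int m - 1)" by (simp add: M_def algebra_simps)
    with c show False by simp
  qed
  have F: "(of_nat (fact n) :: complex) \<noteq> 0" by simp
  have "tt b c m n = pochhammer (- 2 * M) n * pochhammer b n * pochhammer c n /
     (pochhammer (1 - 2 * M - b) n * pochhammer (1 - 2 * M - c) n * of_nat (fact n))"
    by (simp add: tt_def M_def)
  also have "\<dots> = pochhammer (- 2 * (M + 1)) n * pochhammer b n * pochhammer c n /
     (pochhammer (1 - 2 * (M + 1) - b) n * pochhammer (1 - 2 * (M + 1) - c) n * of_nat (fact n)) *
     (((N-2*M-2)*(N-2*M-1)) * (((b+2*M+1)*(b+2*M))*((c+2*M+1)*(c+2*M))) / (((2*(M+1))*(2*M+1)) * (((N-2*M-b-1)*(N-2*M-b))*((N-2*M-c-1)*(N-2*M-c)))))"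
    by (rule generic2[OF s1 s2 s3 z eb ec db dc Pb Pc F])
  also have "pochhammer (- 2 * (M + 1)) n * pochhammer b n * pochhammer c n /
     (pochhammer (1 - 2 * (M + 1) - b) n * pochhammer (1 - 2 * (M + 1) - c) n * of_nat (fact n)) = tt b c (Suc m) n"
  proof -
    have sm: "(of_nat (Suc m) :: complex) = M + 1" by (simp add: M_def)
    show ?thesis by (simp only: tt_def sm)
  qed
  finally show ?thesis by (simp add: M_def N_def)
qed

definition PP :: "complex \<Rightarrow> complex \<Rightarrow> complex \<Rightarrow> complex \<Rightarrow> complex" where
 "PP m b c N = (m+1)*N*N - (m+1)*(6*m+2*b+2*c+3)*N + (2+3*c+c*c+3*b+2*b*c-b*c*c+b*b-b*b*c+11*m+9*m*c+9*m*b-m*b*c+18*m*m+4*m*m*c+4*m*m*b+8*m*m*m)"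

definition VV :: "complex \<Rightarrow> complex \<Rightarrow> complex \<Rightarrow> complex \<Rightarrow> complex" where
 "VV M b c N = N * PP M b c N / (2*(M+1)*(b+c+M)*(N-2*M-b-1)*(N-2*M-c-1))"

definition sg :: "complex \<Rightarrow> complex \<Rightarrow> complex \<Rightarrow> complex" where
 "sg M b c = (b+M)*(c+M)*(2*(2*M+1))*(b+c+2*M)*(b+c+2*M+1)/((b+2*M)*(b+2*M+1)*(c+2*M)*(c+2*M+1)*(b+c+M))"

lemma polyid:
  fixes N M b c :: complex
  shows "2*(M+1)*(b+c+M)*((N-2*M-b-1)*(N-2*M-b)*(N-2*M-c-1)*(N-2*M-c))
     - 2*(b+M)*(c+M)*(b+c+2*M)*(b+c+2*M+1)*((N-2*M-2)*(N-2*M-1))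
   = (N-2*M-2)*(b+N)*(c+N)*PP M b c (N+1) - N*(N-2*M-b)*(N-2*M-c)*PP M b c N"
  unfolding PP_def by algebra

lemma polyid2:
  fixes M b c :: complex
  shows "(2*M+2)*PP M b c (2*M+2) = - (2*(M+1)*(b+c+M)*(1-b)*(1-c))"
  unfolding PP_def by algebra

lemma generic:
  fixes u1 u2 s w1 w2 p1 p2 q1 q2 x y1 y2 g d1 d2 d3 d4 e A B N f1 f2 :: complex
  assumes h: "2*g*x*(d1*d2*d3*d4) - 2*u1*u2*w1*w2*(y1*y2) = y1*f1*f2*A - N*d2*d4*B"
  and nz: "s\<noteq>0" "p1\<noteq>0" "p2\<noteq>0" "q1\<noteq>0" "q2\<noteq>0" "x\<noteq>0" "g\<noteq>0" "d1\<noteq>0" "d2\<noteq>0" "d3\<noteq>0" "d4\<noteq>0" "e\<noteq>0"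
  shows "1 - u1*u2*(2* s)*w1*w2/(p1*p2*q1*q2*x) * (((y1*y2)*((p2*p1)*(q2*q1)))/(((2*g)* s)*((d1*d2)*(d3*d4))))
     = y1*f1*f2/(d1*d3*e) * (e*A/(2*g*x*d2*d4)) - N*B/(2*g*x*d1*d3)"
proof -
  have "1 - u1*u2*(2* s)*w1*w2/(p1*p2*q1*q2*x) * (((y1*y2)*((p2*p1)*(q2*q1)))/(((2*g)* s)*((d1*d2)*(d3*d4))))
      = (2*g*x*(d1*d2*d3*d4) - 2*u1*u2*w1*w2*(y1*y2)) / (2*g*x*(d1*d2*d3*d4))"
    using nz by (simp add: field_simps)
  also have "\<dots> = (y1*f1*f2*A - N*d2*d4*B) / (2*g*x*(d1*d2*d3*d4))" by (simp only: h)
  also have "\<dots> = y1*f1*f2/(d1*d3*e) * (e*A/(2*g*x*d2*d4)) - N*B/(2*g*x*d1*d3)"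
    using nz by (simp add: field_simps)
  finally show ?thesis .
qed

lemma gen_next:
  fixes p0 a0 pb pc pB pC dB dC F f1 f2 e :: complex
  shows "p0 * a0 * (pb * f1) * (pc * f2) / (pB * dB * (pC * dC) * (F * e)) = p0 * pb * pc / (pB * pC * F) * (a0 * f1 * f2 / (dB * dC * e))"
  by (simp add: mult_ac)

lemma ring3: "(X::complex) + t - s*Y = (X - s*Y) + t" by algebra
lemma ring1: "(T::complex) - s*(T*a) = T*(1-s*a)" by algebra
lemma ring2: "(T::complex)*(r*z1 - z0) = T*r*z1 - T*z0" by algebra

lemma tt_next:
  fixes b c :: complex and m n :: nat
  shows "tt b c (Suc m) (Suc n) = tt b c (Suc m) n *
     ((of_nat n - 2 * of_nat m - 2) * (b + of_nat n) * (c + of_nat n) /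
      ((of_nat n - 2 * of_nat m - b - 1) * (of_nat n - 2 * of_nat m - c - 1) * (of_nat n + 1)))"
proof -
  have e1: "- 2 * of_nat (Suc m) + of_nat n = (of_nat n - 2 * of_nat m - 2 :: complex)" by (simp add: algebra_simps)
  have e2: "1 - 2 * of_nat (Suc m) - b + of_nat n = (of_nat n - 2 * of_nat m - b - 1 :: complex)" by (simp add: algebra_simps)
  have e3: "1 - 2 * of_nat (Suc m) - c + of_nat n = (of_nat n - 2 * of_nat m - c - 1 :: complex)" by (simp add: algebra_simps)
  have e4: "(of_nat (fact (Suc n)) :: complex) = of_nat (fact n) * (of_nat n + 1)"
    by (simp add: algebra_simps)
  show ?thesis
    unfolding tt_def pochhammer_Suc e1 e2 e3 e4 by (rule gen_next)
qed

lemma key: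
  fixes b c :: complex and k m n :: nat
  assumes k: "k \<ge> 1" and b: "b = of_nat k + 1" and c: "c \<notin> \<int>" and n: "n \<le> 2*m+1"
  shows "tt b c (Suc m) n - sg (of_nat m) b c * tt b c m n
     = tt b c (Suc m) (Suc n) * VV (of_nat m) b c (of_nat (Suc n)) - tt b c (Suc m) n * VV (of_nat m) b c (of_nat n)"
proof -
  define N :: complex where "N = of_nat n"
  define M :: complex where "M = of_nat m"
  define T where "T = tt b c (Suc m) n"
  have s: "2*M+1\<noteq>0" by (rule nz_int[of _ "2*int m+1"]) (simp_all add: M_def)
  have g: "M+1\<noteq>0" by (rule nz_int[of _ "int m+1"]) (simp_all add: M_def)
  have e: "N+1\<noteq>0" by (rule nz_int[of _ "int n+1"]) (simp_all add: N_def)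
  have p1: "b+2*M\<noteq>0" by (rule nz_int[of _ "int k+1+2*int m"]) (simp_all add: M_def b)
  have p2: "b+2*M+1\<noteq>0" by (rule nz_int[of _ "int k+2+2*int m"]) (simp_all add: M_def b)
  have q1: "c+2*M\<noteq>0" by (rule nz_c1[OF c, of _ "2*int m"]) (simp add: M_def)
  have q2: "c+2*M+1\<noteq>0" by (rule nz_c1[OF c, of _ "2*int m+1"]) (simp add: M_def)
  have x: "b+c+M\<noteq>0" by (rule nz_c1[OF c, of _ "int k+1+int m"]) (simp add: M_def b)
  have d1: "N-2*M-b-1\<noteq>0"
    apply (rule nz_int[of _ "int n-2*int m-int k-2"])
    subgoal by (simp add: M_def N_def b)
    subgoal using n by simp
    done
  have d2: "N-2*M-b\<noteq>0"
    apply (rule nz_int[of _ "int n-2*int m-int k-1"])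
    subgoal by (simp add: M_def N_def b)
    subgoal using n k by simp
    done
  have d3: "N-2*M-c-1\<noteq>0" by (rule nz_c2[OF c, of _ "int n-2*int m-1"]) (simp add: M_def N_def)
  have d4: "N-2*M-c\<noteq>0" by (rule nz_c2[OF c, of _ "int n-2*int m"]) (simp add: M_def N_def)
  have G: "1 - sg M b c * ((N-2*M-2)*(N-2*M-1) * (((b+2*M+1)*(b+2*M))*((c+2*M+1)*(c+2*M)))
      / (((2*(M+1))*(2*M+1)) * (((N-2*M-b-1)*(N-2*M-b))*((N-2*M-c-1)*(N-2*M-c)))))
     = (N-2*M-2)*(b+N)*(c+N)/((N-2*M-b-1)*(N-2*M-c-1)*(N+1)) * ((N+1)*PP M b c (N+1)/(2*(M+1)*(b+c+M)*(N-2*M-b)*(N-2*M-c)))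
       - N*PP M b c N/(2*(M+1)*(b+c+M)*(N-2*M-b-1)*(N-2*M-c-1))"
    unfolding sg_def by (rule generic[OF polyid s p1 p2 q1 q2 x g d1 d2 d3 d4 e])
  have V1: "VV M b c (N+1) = (N+1)*PP M b c (N+1)/(2*(M+1)*(b+c+M)*(N-2*M-b)*(N-2*M-c))"
  proof -
    have h1: "N+1-2*M-b-1 = N-2*M-b" and h2: "N+1-2*M-c-1 = N-2*M-c" by simp_all
    show ?thesis unfolding VV_def h1 h2 by (rule refl)
  qed
  have R1: "tt b c m n = T * ((N-2*M-2)*(N-2*M-1) * (((b+2*M+1)*(b+2*M))*((c+2*M+1)*(c+2*M)))
      / (((2*(M+1))*(2*M+1)) * (((N-2*M-b-1)*(N-2*M-b))*((N-2*M-c-1)*(N-2*M-c)))))"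
    unfolding T_def N_def M_def by (rule tt_rel[OF k b c n])
  have R2: "tt b c (Suc m) (Suc n) = T * ((N-2*M-2)*(b+N)*(c+N)/((N-2*M-b-1)*(N-2*M-c-1)*(N+1)))"
    unfolding T_def N_def M_def by (rule tt_next)
  have "tt b c (Suc m) n - sg M b c * tt b c m n = T * (1 - sg M b c * ((N-2*M-2)*(N-2*M-1) * (((b+2*M+1)*(b+2*M))*((c+2*M+1)*(c+2*M)))
      / (((2*(M+1))*(2*M+1)) * (((N-2*M-b-1)*(N-2*M-b))*((N-2*M-c-1)*(N-2*M-c))))))"
    unfolding R1 T_def by (rule ring1)
  also have "\<dots> = T * ((N-2*M-2)*(b+N)*(c+N)/((N-2*M-b-1)*(N-2*M-c-1)*(N+1))) * VV M b c (N+1) - T * VV M b c N"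
    unfolding G V1 VV_def[of M b c N] by (rule ring2)
  also have "\<dots> = tt b c (Suc m) (Suc n) * VV M b c (N+1) - T * VV M b c N"
    unfolding R2 by (rule refl)
  finally have fin: "tt b c (Suc m) n - sg M b c * tt b c m n = tt b c (Suc m) (Suc n) * VV M b c (N+1) - T * VV M b c N" .
  have sn: "(of_nat (Suc n) :: complex) = N + 1" by (simp add: N_def)
  show ?thesis unfolding sn using fin unfolding T_def N_def M_def .
qed

definition SS :: "complex \<Rightarrow> complex \<Rightarrow> nat \<Rightarrow> complex" where
  "SS b c m = (\<Sum>n\<le>2*m. tt b c m n)"

lemma SS_step:
  fixes b c :: complex and k m :: nat
  assumes k: "k \<ge> 1" and b: "b = of_nat k + 1" and c: "c \<notin> \<int>"
  shows "SS b c (Suc m) = sg (of_nat m) b c * SS b c m"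
proof -
  define M where "M = (of_nat m :: complex)"
  define H where "H n = tt b c (Suc m) n * VV M b c (of_nat n)" for n
  have tel: "(\<Sum>n<2*m+2. tt b c (Suc m) n - sg M b c * tt b c m n) = H (2*m+2) - H 0"
  proof -
    have "(\<Sum>n<2*m+2. tt b c (Suc m) n - sg M b c * tt b c m n) = (\<Sum>n<2*m+2. H (Suc n) - H n)"
    proof (rule sum.cong)
      fix n assume "n \<in> {..<2*m+2}"
      then have "n \<le> 2*m+1" by simp
      from key[OF k b c this] show "tt b c (Suc m) n - sg M b c * tt b c m n = H (Suc n) - H n"
        by (simp add: H_def M_def)
    qed simp
    also have "\<dots> = H (2*m+2) - H 0" by (rule sum_lessThan_telescope)
    finally show ?thesis .
  qed
  have H0: "H 0 = 0" by (simp add: H_def VV_def)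
  have z1: "tt b c m (2*m+1) = 0"
  proof -
    have e: "(- 2 * of_nat m :: complex) = - of_nat (2*m)" by simp
    have "pochhammer (- of_nat (2*m) :: complex) (2*m+1) = 0"
      by (rule iffD2[OF pochhammer_of_nat_eq_0_iff]) simp
    then have "pochhammer (- 2 * of_nat m :: complex) (2*m+1) = 0" unfolding e .
    then show ?thesis by (simp add: tt_def)
  qed
  have VVend: "VV M b c (of_nat (2*m+2)) = -1"
  proof -
    have e: "(of_nat (2*m+2)::complex) = 2*M+2" by (simp add: M_def)
    have h1: "2*M+2-2*M-b-1 = 1-b" and h2: "2*M+2-2*M-c-1 = 1-c" by simp_all
    have n1: "M+1 \<noteq> 0" by (rule nz_int[of _ "int m+1"]) (simp_all add: M_def)
    have n2: "b+c+M \<noteq> 0" by (rule nz_c1[OF c, of _ "int k+1+int m"]) (simp add: M_def b)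
    have n3: "1-b \<noteq> 0" using k by (simp add: b)
    have n4: "1-c \<noteq> 0" by (rule nz_c2[OF c, of _ 1]) simp
    have n5: "2*M+2 \<noteq> 0" by (rule nz_int[of _ "2*int m+2"]) (simp_all add: M_def)
    have nz: "2*(M+1)*(b+c+M)*(1-b)*(1-c) \<noteq> 0" using n1 n2 n3 n4 n5 by simp
    show ?thesis unfolding VV_def e h1 h2 polyid2 using nz n5 by simp
  qed
  have A: "SS b c (Suc m) = (\<Sum>n<2*m+2. tt b c (Suc m) n) + tt b c (Suc m) (2*m+2)"
  proof -
    have "SS b c (Suc m) = (\<Sum>n<Suc (2*m+2). tt b c (Suc m) n)"
      unfolding SS_def lessThan_Suc_atMost by simp
    then show ?thesis by simp
  qed
  have B: "(\<Sum>n<2*m+2. tt b c m n) = SS b c m"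
  proof -
    have "(\<Sum>n<2*m+2. tt b c m n) = (\<Sum>n<Suc (2*m). tt b c m n) + tt b c m (2*m+1)"
      by (simp add: sum.lessThan_Suc)
    then show ?thesis unfolding SS_def lessThan_Suc_atMost z1 by simp
  qed
  have C: "(\<Sum>n<2*m+2. tt b c (Suc m) n - sg M b c * tt b c m n)
      = (\<Sum>n<2*m+2. tt b c (Suc m) n) - sg M b c * (\<Sum>n<2*m+2. tt b c m n)"
    by (simp only: sum_subtractf sum_distrib_left)
  have "SS b c (Suc m) - sg M b c * SS b c m = ((\<Sum>n<2*m+2. tt b c (Suc m) n) - sg M b c * (\<Sum>n<2*m+2. tt b c m n)) + tt b c (Suc m) (2*m+2)"
    unfolding A B[symmetric] by (rule ring3)
  also have "\<dots> = (H (2*m+2) - H 0) + tt b c (Suc m) (2*m+2)" unfolding C[symmetric] tel ..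
  also have "\<dots> = 0" unfolding H_def VVend by (simp add: VV_def)
  finally show ?thesis unfolding M_def by simp
qed

definition RR :: "complex \<Rightarrow> complex \<Rightarrow> nat \<Rightarrow> complex" where
  "RR b c m = pochhammer b m * pochhammer c m * 2 ^ (2 * m)
             * pochhammer (1 / 2) m * pochhammer (b + c) (2 * m)
           / (pochhammer b (2 * m) * pochhammer c (2 * m)
             * pochhammer (b + c) m)"

lemma genR:
  fixes Pb Pc Pw Ph Pbc Qb Qc Qbc u1 u2 h s w1 w2 p1 p2 q1 q2 x :: complex
  assumes "2*h = s" "Qb\<noteq>0" "Qc\<noteq>0" "Qbc\<noteq>0" "p1\<noteq>0" "p2\<noteq>0" "q1\<noteq>0" "q2\<noteq>0" "x\<noteq>0"
  shows "(Pb*u1)*(Pc*u2)*(Pw*4)*(Ph*h)*(Pbc*w1*w2) / ((Qb*p1*p2)*(Qc*q1*q2)*(Qbc*x))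
    = u1*u2*(2* s)*w1*w2/(p1*p2*q1*q2*x) * (Pb*Pc*Pw*Ph*Pbc/(Qb*Qc*Qbc))"
proof -
  have "h*2 = s" using assms(1) by (simp add: mult.commute)
  then show ?thesis using assms(2-) by (simp add: field_simps)
qed

lemma RR_step:
  fixes b c :: complex and k m :: nat
  assumes k: "k \<ge> 1" and b: "b = of_nat k + 1" and c: "c \<notin> \<int>"
  shows "RR b c (Suc m) = sg (of_nat m) b c * RR b c m"
proof -
  define M where "M = (of_nat m :: complex)"
  have e2: "2 * Suc m = Suc (Suc (2*m))" by simp
  have o1: "(of_nat (2*m) :: complex) = 2*M" and o2: "(of_nat (Suc (2*m)) :: complex) = 2*M+1"
    by (simp_all add: M_def)
  have p2: "pochhammer a (Suc (Suc (2*m))) = pochhammer a (2*m) * (a + 2*M) * (a + 2*M + 1)" for a :: complex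
    by (simp add: pochhammer_Suc M_def algebra_simps)
  have w: "(2::complex) ^ Suc (Suc (2*m)) = 2^(2*m) * 4" by simp
  have Qb: "pochhammer b (2*m) \<noteq> 0"
  proof
    assume "pochhammer b (2*m) = 0"
    then obtain j where "b = - of_nat j" by (auto simp: pochhammer_eq_0_iff)
    then have "b + of_nat j = 0" by simp
    then have "(of_nat (k + 1 + j) :: complex) = 0" by (simp add: b add_ac)
    then show False by (simp only: of_nat_eq_0_iff)
  qed
  have Qc: "pochhammer c (2*m) \<noteq> 0"
    using c by (auto simp: pochhammer_eq_0_iff)
  have Qbc: "pochhammer (b+c) m \<noteq> 0"
  proof
    assume "pochhammer (b+c) m = 0"
    then obtain j where "b + c = - of_nat j" by (auto simp: pochhammer_eq_0_iff)
    then have "c = of_int (- int j - int k - 1)" by (simp add: b algebra_simps)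
    with c show False by simp
  qed
  have pp1: "b+2*M\<noteq>0" by (rule nz_int[of _ "int k+1+2*int m"]) (simp_all add: M_def b)
  have pp2: "b+2*M+1\<noteq>0" by (rule nz_int[of _ "int k+2+2*int m"]) (simp_all add: M_def b)
  have qq1: "c+2*M\<noteq>0" by (rule nz_c1[OF c, of _ "2*int m"]) (simp add: M_def)
  have qq2: "c+2*M+1\<noteq>0" by (rule nz_c1[OF c, of _ "2*int m+1"]) (simp add: M_def)
  have x: "b+c+M\<noteq>0" by (rule nz_c1[OF c, of _ "int k+1+int m"]) (simp add: M_def b)
  have oM: "of_nat m = M" by (simp add: M_def)
  have hs: "2*(1/2+M) = 2*M+1" by (simp add: algebra_simps)
  have "RR b c (Suc m) = (pochhammer b m * (b+M)) * (pochhammer c m * (c+M)) * (2^(2*m)*4) * (pochhammer (1/2) m * (1/2+M))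
       * (pochhammer (b+c) (2*m) * (b+c+2*M) * (b+c+2*M+1))
     / ((pochhammer b (2*m) * (b+2*M) * (b+2*M+1)) * (pochhammer c (2*m) * (c+2*M) * (c+2*M+1)) * (pochhammer (b+c) m * (b+c+M)))"
    unfolding RR_def e2 p2 w unfolding pochhammer_Suc oM ..
  also have "\<dots> = sg M b c * RR b c m"
    unfolding sg_def RR_def
    by (rule genR[OF hs Qb Qc Qbc pp1 pp2 qq1 qq2 x])
  finally show ?thesis unfolding M_def .
qed

lemma SS_RR:
  fixes b c :: complex and k m :: nat
  assumes k: "k \<ge> 1" and b: "b = of_nat k + 1" and c: "c \<notin> \<int>"
  shows "SS b c m = RR b c m"
proof (induction m)
  case 0
  then show ?case by (simp add: SS_def RR_def tt_def)
next
  case (Suc m)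
  then show ?case using SS_step[OF k b c] RR_step[OF k b c] by simp
qed

theorem mainTheorem10:
  fixes m k :: nat and \<gamma> :: complex
  assumes "m \<ge> 1" and "k \<ge> 1"
    and "\<gamma> \<notin> \<int>\<^sub>\<le>\<^sub>0" and "1 - 2 * of_nat m - \<gamma> \<notin> \<int>\<^sub>\<le>\<^sub>0"
  shows "hyp3F2_trunc (- 2 * of_nat m) (1 + of_nat k) \<gamma>
            (- 2 * of_nat m - of_nat k) (1 - 2 * of_nat m - \<gamma>) 1 (2 * m)
         = pochhammer (1 + of_nat k) m * pochhammer \<gamma> m * 2 ^ (2 * m)
             * pochhammer (1 / 2) m * pochhammer (1 + of_nat k + \<gamma>) (2 * m)
           / (pochhammer (1 + of_nat k) (2 * m) * pochhammer \<gamma> (2 * m)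
             * pochhammer (1 + of_nat k + \<gamma>) m)"
proof -
  define b where "b = 1 + (of_nat k :: complex)"
  have bk: "b = of_nat k + 1" by (simp add: b_def)
  have c: "\<gamma> \<notin> \<int>"
  proof
    assume "\<gamma> \<in> \<int>"
    then obtain i where i: "\<gamma> = of_int i" by (auto elim: Ints_cases)
    show False
    proof (cases "i \<le> 0")
      case True
      then have "\<gamma> \<in> \<int>\<^sub>\<le>\<^sub>0" using i by (simp add: nonpos_Ints_of_int)
      with assms(3) show False by simp
    next
      case False
      have eq: "1 - 2 * of_nat m - \<gamma> = of_int (1 - 2 * int m - i)" by (simp add: i)
      have le: "1 - 2 * int m - i \<le> 0" using False assms(1) by simp
      have "(of_int (1 - 2 * int m - i) :: complex) \<in> \<int>\<^sub>\<le>\<^sub>0" using le by (rule nonpos_Ints_of_int)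
      then have "1 - 2 * of_nat m - \<gamma> \<in> \<int>\<^sub>\<le>\<^sub>0" unfolding eq .
      with assms(4) show False by simp
    qed
  qed
  have L: "hyp3F2_trunc (- 2 * of_nat m) (1 + of_nat k) \<gamma>
            (- 2 * of_nat m - of_nat k) (1 - 2 * of_nat m - \<gamma>) 1 (2 * m) = SS b \<gamma> m"
    unfolding hyp3F2_trunc_def SS_def
  proof (rule sum.cong)
    fix n
    have e: "1 - 2 * of_nat m - b = - 2 * of_nat m - of_nat k" by (simp add: b_def)
    show "pochhammer (- 2 * of_nat m) n * pochhammer (1 + of_nat k) n * pochhammer \<gamma> n /
         (pochhammer (- 2 * of_nat m - of_nat k) n * pochhammer (1 - 2 * of_nat m - \<gamma>) n) * 1 ^ n / of_nat (fact n)
         = tt b \<gamma> m n"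
      unfolding tt_def e by (simp add: b_def)
  qed simp
  have R: "pochhammer (1 + of_nat k) m * pochhammer \<gamma> m * 2 ^ (2 * m)
             * pochhammer (1 / 2) m * pochhammer (1 + of_nat k + \<gamma>) (2 * m)
           / (pochhammer (1 + of_nat k) (2 * m) * pochhammer \<gamma> (2 * m)
             * pochhammer (1 + of_nat k + \<gamma>) m) = RR b \<gamma> m"
    unfolding RR_def b_def ..
  show ?thesis unfolding L R using SS_RR[OF assms(2) bk c] .
qed

end
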